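(* Let $\mathcal{W}$ be a weakly exact structure on an additive category $\mathcal{A}$. (1) If $A\xrightarrow{i}B\xrightarrow{j}C$ are morphisms in $\mathcal{A}$ such that $i$ has a cokernel and $ji$ is an admissible monic of $\mathcal{W}$, then $i$ is an admissible monic of $\mathcal{W}$. (2) If $X\xrightarrow{f}Y\xrightarrow{g}Z$ are morphisms in $\mathcal{A}$ such that $g$ has a kernel and $gf$ is an admissible epic of $\mathcal{W}$, then $g$ is an admissible epic of $\mathcal{W}$.
   Context: Let $\mathcal{A}$ be an additive category. A kernel-cokernel pair (short exact sequence) is a pair of composable morphisms $A\xrightarrow{i}B\xrightarrow{d}C$ with $i$ a kernel of $d$ and $d$ a cokernel of $i$. A weakly exact structure on $\mathcal{A}$ is a class $\mathcal{W}$ of kernel-cokernel pairs, closed under isomorphisms of sequences and under finite direct sums of sequences, such that, calling $i$ an admissible monic (resp. $d$ an admissible epic) if $(i,d)\in\mathcal{W}$ for some $d$ (resp. some $i$): (E0) $1_A$ is an admissible monic for every object $A$; (E0)$^{op}$ $1_A$ is an admissible epic for every object $A$; (E2) for every admissible monic $i:A\to B$ and every morphism $t:A\to C$ the pushout of $i$ along $t$ exists and the resulting morphism $C\to S$ is an admissible monic; (E2)$^{op}$ for every admissible epic $h:A\to C$ and every morphism $t:B\to C$ the pullback of $h$ along $t$ exists and the resulting morphism $P\to B$ is an admissible epic. *)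

theory Defs
  imports Main
begin

text \<open>A category with abelian-group enriched hom-sets, presented concretely:
  objects, morphisms with domain/codomain, composition (cmp g f = g after f),
  identities, addition of parallel morphisms and zero morphisms.\<close>

record ('o, 'm) precat =
  obj :: "'o set"
  mor :: "'m set"
  dm  :: "'m \<Rightarrow> 'o"
  cd  :: "'m \<Rightarrow> 'o"
  cmp :: "'m \<Rightarrow> 'm \<Rightarrow> 'm"
  idt :: "'o \<Rightarrow> 'm"
  pls :: "'m \<Rightarrow> 'm \<Rightarrow> 'm"
  zro :: "'o \<Rightarrow> 'o \<Rightarrow> 'm"

definition hom :: "('o, 'm) precat \<Rightarrow> 'o \<Rightarrow> 'o \<Rightarrow> 'm set" where
  "hom C a b = {f \<in> mor C. dm C f = a \<and> cd C f = b}"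

definition category :: "('o, 'm) precat \<Rightarrow> bool" where
  "category C \<longleftrightarrow>
     (\<forall>f\<in>mor C. dm C f \<in> obj C \<and> cd C f \<in> obj C) \<and>
     (\<forall>a\<in>obj C. idt C a \<in> hom C a a) \<and>
     (\<forall>a b c f g. f \<in> hom C a b \<longrightarrow> g \<in> hom C b c \<longrightarrow> cmp C g f \<in> hom C a c) \<and>
     (\<forall>a b c d f g h. f \<in> hom C a b \<longrightarrow> g \<in> hom C b c \<longrightarrow> h \<in> hom C c d \<longrightarrow>
        cmp C h (cmp C g f) = cmp C (cmp C h g) f) \<and>
     (\<forall>a b f. f \<in> hom C a b \<longrightarrow> cmp C (idt C b) f = f \<and> cmp C f (idt C a) = f)"

definition preadditive :: "('o, 'm) precat \<Rightarrow> bool" where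
  "preadditive C \<longleftrightarrow> category C \<and>
     (\<forall>a\<in>obj C. \<forall>b\<in>obj C.
        zro C a b \<in> hom C a b \<and>
        (\<forall>f\<in>hom C a b. \<forall>g\<in>hom C a b. pls C f g \<in> hom C a b \<and> pls C f g = pls C g f) \<and>
        (\<forall>f\<in>hom C a b. \<forall>g\<in>hom C a b. \<forall>h\<in>hom C a b.
            pls C (pls C f g) h = pls C f (pls C g h)) \<and>
        (\<forall>f\<in>hom C a b. pls C f (zro C a b) = f) \<and>
        (\<forall>f\<in>hom C a b. \<exists>g\<in>hom C a b. pls C f g = zro C a b)) \<and>
     (\<forall>a b c f g h. f \<in> hom C a b \<longrightarrow> g \<in> hom C a b \<longrightarrow> h \<in> hom C b c \<longrightarrow>
        cmp C h (pls C f g) = pls C (cmp C h f) (cmp C h g)) \<and>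
     (\<forall>a b c f g h. h \<in> hom C a b \<longrightarrow> f \<in> hom C b c \<longrightarrow> g \<in> hom C b c \<longrightarrow>
        cmp C (pls C f g) h = pls C (cmp C f h) (cmp C g h))"

definition zero_object :: "('o, 'm) precat \<Rightarrow> 'o \<Rightarrow> bool" where
  "zero_object C z \<longleftrightarrow> z \<in> obj C \<and>
     (\<forall>a\<in>obj C. (\<exists>!f. f \<in> hom C z a) \<and> (\<exists>!f. f \<in> hom C a z))"

definition is_biproduct ::
  "('o, 'm) precat \<Rightarrow> 'o \<Rightarrow> 'o \<Rightarrow> 'o \<Rightarrow> 'm \<Rightarrow> 'm \<Rightarrow> 'm \<Rightarrow> 'm \<Rightarrow> bool" where
  "is_biproduct C a b s i1 i2 p1 p2 \<longleftrightarrow> s \<in> obj C \<and>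
     i1 \<in> hom C a s \<and> i2 \<in> hom C b s \<and> p1 \<in> hom C s a \<and> p2 \<in> hom C s b \<and>
     cmp C p1 i1 = idt C a \<and> cmp C p2 i2 = idt C b \<and>
     cmp C p1 i2 = zro C b a \<and> cmp C p2 i1 = zro C a b \<and>
     pls C (cmp C i1 p1) (cmp C i2 p2) = idt C s"

definition additive_cat :: "('o, 'm) precat \<Rightarrow> bool" where
  "additive_cat C \<longleftrightarrow> preadditive C \<and> (\<exists>z. zero_object C z) \<and>
     (\<forall>a\<in>obj C. \<forall>b\<in>obj C. \<exists>s i1 i2 p1 p2. is_biproduct C a b s i1 i2 p1 p2)"

definition is_kernel :: "('o, 'm) precat \<Rightarrow> 'm \<Rightarrow> 'm \<Rightarrow> bool" where
  "is_kernel C i d \<longleftrightarrow> i \<in> mor C \<and> d \<in> mor C \<and> cd C i = dm C d \<and>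
     cmp C d i = zro C (dm C i) (cd C d) \<and>
     (\<forall>x\<in>obj C. \<forall>t\<in>hom C x (dm C d). cmp C d t = zro C x (cd C d) \<longrightarrow>
        (\<exists>!u. u \<in> hom C x (dm C i) \<and> cmp C i u = t))"

definition is_cokernel :: "('o, 'm) precat \<Rightarrow> 'm \<Rightarrow> 'm \<Rightarrow> bool" where
  "is_cokernel C d i \<longleftrightarrow> i \<in> mor C \<and> d \<in> mor C \<and> cd C i = dm C d \<and>
     cmp C d i = zro C (dm C i) (cd C d) \<and>
     (\<forall>x\<in>obj C. \<forall>t\<in>hom C (cd C i) x. cmp C t i = zro C (dm C i) x \<longrightarrow>
        (\<exists>!u. u \<in> hom C (cd C d) x \<and> cmp C u d = t))"

definition kc_pair :: "('o, 'm) precat \<Rightarrow> 'm \<Rightarrow> 'm \<Rightarrow> bool" where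
  "kc_pair C i d \<longleftrightarrow> is_kernel C i d \<and> is_cokernel C d i"

definition has_kernel :: "('o, 'm) precat \<Rightarrow> 'm \<Rightarrow> bool" where
  "has_kernel C d \<longleftrightarrow> (\<exists>i. is_kernel C i d)"

definition has_cokernel :: "('o, 'm) precat \<Rightarrow> 'm \<Rightarrow> bool" where
  "has_cokernel C i \<longleftrightarrow> (\<exists>d. is_cokernel C d i)"

definition iso :: "('o, 'm) precat \<Rightarrow> 'm \<Rightarrow> bool" where
  "iso C f \<longleftrightarrow> f \<in> mor C \<and>
     (\<exists>g\<in>hom C (cd C f) (dm C f). cmp C g f = idt C (dm C f) \<and> cmp C f g = idt C (cd C f))"

definition adm_monic :: "('m \<times> 'm) set \<Rightarrow> 'm \<Rightarrow> bool" where
  "adm_monic W i \<longleftrightarrow> (\<exists>d. (i, d) \<in> W)"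

definition adm_epic :: "('m \<times> 'm) set \<Rightarrow> 'm \<Rightarrow> bool" where
  "adm_epic W d \<longleftrightarrow> (\<exists>i. (i, d) \<in> W)"

definition is_pushout :: "('o, 'm) precat \<Rightarrow> 'm \<Rightarrow> 'm \<Rightarrow> 'm \<Rightarrow> 'm \<Rightarrow> bool" where
  "is_pushout C i t t' i' \<longleftrightarrow> i \<in> mor C \<and> t \<in> mor C \<and> t' \<in> mor C \<and> i' \<in> mor C \<and>
     dm C t = dm C i \<and> dm C t' = cd C i \<and> dm C i' = cd C t \<and> cd C t' = cd C i' \<and>
     cmp C t' i = cmp C i' t \<and>
     (\<forall>x\<in>obj C. \<forall>u\<in>hom C (cd C i) x. \<forall>v\<in>hom C (cd C t) x. cmp C u i = cmp C v t \<longrightarrow>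
        (\<exists>!w. w \<in> hom C (cd C t') x \<and> cmp C w t' = u \<and> cmp C w i' = v))"

definition is_pullback :: "('o, 'm) precat \<Rightarrow> 'm \<Rightarrow> 'm \<Rightarrow> 'm \<Rightarrow> 'm \<Rightarrow> bool" where
  "is_pullback C h t h' t' \<longleftrightarrow> h \<in> mor C \<and> t \<in> mor C \<and> h' \<in> mor C \<and> t' \<in> mor C \<and>
     cd C t = cd C h \<and> cd C h' = dm C t \<and> cd C t' = dm C h \<and> dm C h' = dm C t' \<and>
     cmp C h t' = cmp C t h' \<and>
     (\<forall>x\<in>obj C. \<forall>u\<in>hom C x (dm C h). \<forall>v\<in>hom C x (dm C t). cmp C h u = cmp C t v \<longrightarrow>
        (\<exists>!w. w \<in> hom C x (dm C h') \<and> cmp C t' w = u \<and> cmp C h' w = v))"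

text \<open>Direct sum f (+) g of morphisms, w.r.t. chosen biproduct data
  (projections q1, q2 of the source, injections j1, j2 of the target).\<close>
definition dsum_mor :: "('o, 'm) precat \<Rightarrow> 'm \<Rightarrow> 'm \<Rightarrow> 'm \<Rightarrow> 'm \<Rightarrow> 'm \<Rightarrow> 'm \<Rightarrow> 'm" where
  "dsum_mor C f g q1 q2 j1 j2 = pls C (cmp C j1 (cmp C f q1)) (cmp C j2 (cmp C g q2))"

definition weakly_exact :: "('o, 'm) precat \<Rightarrow> ('m \<times> 'm) set \<Rightarrow> bool" where
  "weakly_exact C W \<longleftrightarrow>
     (\<forall>(i, d)\<in>W. kc_pair C i d) \<and>
     \<comment> \<open>closed under isomorphisms of sequences\<close>
     (\<forall>i d i' d' \<alpha> \<beta> \<gamma>. (i, d) \<in> W \<longrightarrow> i' \<in> mor C \<longrightarrow> d' \<in> mor C \<longrightarrow> cd C i' = dm C d' \<longrightarrow>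
        \<alpha> \<in> hom C (dm C i) (dm C i') \<longrightarrow> \<beta> \<in> hom C (cd C i) (cd C i') \<longrightarrow>
        \<gamma> \<in> hom C (cd C d) (cd C d') \<longrightarrow> iso C \<alpha> \<longrightarrow> iso C \<beta> \<longrightarrow> iso C \<gamma> \<longrightarrow>
        cmp C \<beta> i = cmp C i' \<alpha> \<longrightarrow> cmp C \<gamma> d = cmp C d' \<beta> \<longrightarrow> (i', d') \<in> W) \<and>
     \<comment> \<open>closed under (binary, hence finite) direct sums of sequences\<close>
     (\<forall>i1 d1 i2 d2 sa ja1 ja2 qa1 qa2 sb jb1 jb2 qb1 qb2 sc jc1 jc2 qc1 qc2.
        (i1, d1) \<in> W \<longrightarrow> (i2, d2) \<in> W \<longrightarrow>
        is_biproduct C (dm C i1) (dm C i2) sa ja1 ja2 qa1 qa2 \<longrightarrow>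
        is_biproduct C (cd C i1) (cd C i2) sb jb1 jb2 qb1 qb2 \<longrightarrow>
        is_biproduct C (cd C d1) (cd C d2) sc jc1 jc2 qc1 qc2 \<longrightarrow>
        (dsum_mor C i1 i2 qa1 qa2 jb1 jb2, dsum_mor C d1 d2 qb1 qb2 jc1 jc2) \<in> W) \<and>
     \<comment> \<open>(E0) and (E0)op\<close>
     (\<forall>a\<in>obj C. adm_monic W (idt C a)) \<and>
     (\<forall>a\<in>obj C. adm_epic W (idt C a)) \<and>
     \<comment> \<open>(E2)\<close>
     (\<forall>i t. adm_monic W i \<longrightarrow> t \<in> mor C \<longrightarrow> dm C t = dm C i \<longrightarrow>
        (\<exists>t' i'. is_pushout C i t t' i' \<and> adm_monic W i')) \<and>
     \<comment> \<open>(E2)op\<close>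
     (\<forall>h t. adm_epic W h \<longrightarrow> t \<in> mor C \<longrightarrow> cd C t = cd C h \<longrightarrow>
        (\<exists>h' t'. is_pullback C h t h' t' \<and> adm_epic W h'))"

end

theory Submission
  imports Defs
begin



locale padd =
  fixes C :: "('o,'m) precat"
  assumes pa: "preadditive C"
begin

abbreviation arr where "arr f \<equiv> f \<in> mor C"

lemma cat: "category C" using pa unfolding preadditive_def by blast

lemma hom_iff: "f \<in> hom C a b \<longleftrightarrow> arr f \<and> dm C f = a \<and> cd C f = b"
  unfolding hom_def by auto

lemmas c1 = cat[unfolded category_def, THEN conjunct1]
lemmas c2 = cat[unfolded category_def, THEN conjunct2, THEN conjunct1]
lemmas c3 = cat[unfolded category_def, THEN conjunct2, THEN conjunct2, THEN conjunct1]
lemmas c4 = cat[unfolded category_def, THEN conjunct2, THEN conjunct2, THEN conjunct2, THEN conjunct1]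
lemmas c5 = cat[unfolded category_def, THEN conjunct2, THEN conjunct2, THEN conjunct2, THEN conjunct2]
lemmas p1 = pa[unfolded preadditive_def, THEN conjunct2, THEN conjunct1]
lemmas p2 = pa[unfolded preadditive_def, THEN conjunct2, THEN conjunct2, THEN conjunct1]
lemmas p3 = pa[unfolded preadditive_def, THEN conjunct2, THEN conjunct2, THEN conjunct2]

lemma arr_dm[simp]: "arr f \<Longrightarrow> dm C f \<in> obj C"
  using c1 by blast
lemma arr_cd[simp]: "arr f \<Longrightarrow> cd C f \<in> obj C"
  using c1 by blast

lemma cmp_hom: "f \<in> hom C a b \<Longrightarrow> g \<in> hom C b c \<Longrightarrow> cmp C g f \<in> hom C a c"
  using c3 by blast

lemma cmp_arr[simp]: "arr f \<Longrightarrow> arr g \<Longrightarrow> cd C f = dm C g \<Longrightarrow> arr (cmp C g f)"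
  and cmp_dm[simp]: "arr f \<Longrightarrow> arr g \<Longrightarrow> cd C f = dm C g \<Longrightarrow> dm C (cmp C g f) = dm C f"
  and cmp_cd[simp]: "arr f \<Longrightarrow> arr g \<Longrightarrow> cd C f = dm C g \<Longrightarrow> cd C (cmp C g f) = cd C g"
  using cmp_hom[of f "dm C f" "cd C f" g "cd C g"] by (auto simp: hom_iff)

lemma assoc: "arr f \<Longrightarrow> arr g \<Longrightarrow> arr h \<Longrightarrow> cd C f = dm C g \<Longrightarrow> cd C g = dm C h \<Longrightarrow>
   cmp C h (cmp C g f) = cmp C (cmp C h g) f"
  by (rule c4[rule_format, of f "dm C f" "cd C f" g "cd C g" h "cd C h"]) (simp_all add: hom_iff)

lemma idt_arr[simp]: "a \<in> obj C \<Longrightarrow> arr (idt C a)"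
  and idt_dm[simp]: "a \<in> obj C \<Longrightarrow> dm C (idt C a) = a"
  and idt_cd[simp]: "a \<in> obj C \<Longrightarrow> cd C (idt C a) = a"
  using c2 unfolding hom_iff by blast+

lemma idl: "arr f \<Longrightarrow> cd C f = b \<Longrightarrow> cmp C (idt C b) f = f"
  and idr: "arr f \<Longrightarrow> dm C f = a \<Longrightarrow> cmp C f (idt C a) = f"
  using c5 unfolding hom_iff by blast+

lemma zro_arr[simp]: "a \<in> obj C \<Longrightarrow> b \<in> obj C \<Longrightarrow> arr (zro C a b)"
  and zro_dm[simp]: "a \<in> obj C \<Longrightarrow> b \<in> obj C \<Longrightarrow> dm C (zro C a b) = a"
  and zro_cd[simp]: "a \<in> obj C \<Longrightarrow> b \<in> obj C \<Longrightarrow> cd C (zro C a b) = b"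
  using p1 unfolding hom_iff by blast+

lemma p1i: "a \<in> obj C \<Longrightarrow> b \<in> obj C \<Longrightarrow> zro C a b \<in> hom C a b \<and>
        (\<forall>f\<in>hom C a b. \<forall>g\<in>hom C a b. pls C f g \<in> hom C a b \<and> pls C f g = pls C g f) \<and>
        (\<forall>f\<in>hom C a b. \<forall>g\<in>hom C a b. \<forall>h\<in>hom C a b.
            pls C (pls C f g) h = pls C f (pls C g h)) \<and>
        (\<forall>f\<in>hom C a b. pls C f (zro C a b) = f) \<and>
        (\<forall>f\<in>hom C a b. \<exists>g\<in>hom C a b. pls C f g = zro C a b)"
  using p1 by blast

lemma pls_arr[simp]: "arr f \<Longrightarrow> arr g \<Longrightarrow> dm C g = dm C f \<Longrightarrow> cd C g = cd C f \<Longrightarrow> arr (pls C f g)"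
  and pls_dm[simp]: "arr f \<Longrightarrow> arr g \<Longrightarrow> dm C g = dm C f \<Longrightarrow> cd C g = cd C f \<Longrightarrow> dm C (pls C f g) = dm C f"
  and pls_cd[simp]: "arr f \<Longrightarrow> arr g \<Longrightarrow> dm C g = dm C f \<Longrightarrow> cd C g = cd C f \<Longrightarrow> cd C (pls C f g) = cd C f"
proof -
  assume a: "arr f" "arr g" "dm C g = dm C f" "cd C g = cd C f"
  have "pls C f g \<in> hom C (dm C f) (cd C f)"
    using p1i[of "dm C f" "cd C f"] a by (simp add: hom_iff)
  thus "arr (pls C f g)" by (simp add: hom_iff)
next
  assume a: "arr f" "arr g" "dm C g = dm C f" "cd C g = cd C f"
  have "pls C f g \<in> hom C (dm C f) (cd C f)"
    using p1i[of "dm C f" "cd C f"] a by (simp add: hom_iff)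
  thus "dm C (pls C f g) = dm C f" by (simp add: hom_iff)
next
  assume a: "arr f" "arr g" "dm C g = dm C f" "cd C g = cd C f"
  have "pls C f g \<in> hom C (dm C f) (cd C f)"
    using p1i[of "dm C f" "cd C f"] a by (simp add: hom_iff)
  thus "cd C (pls C f g) = cd C f" by (simp add: hom_iff)
qed

lemma pls_comm: assumes "arr f" "arr g" "dm C g = dm C f" "cd C g = cd C f" shows "pls C f g = pls C g f"
proof -
  have "f \<in> hom C (dm C f) (cd C f)" "g \<in> hom C (dm C f) (cd C f)" "dm C f \<in> obj C" "cd C f \<in> obj C"
    using assms by (auto simp: hom_iff)
  with p1i show ?thesis by blast
qed

lemma pls_assoc: assumes "arr f" "arr g" "arr h" "dm C g = dm C f" "cd C g = cd C f"
  "dm C h = dm C f" "cd C h = cd C f" shows "pls C (pls C f g) h = pls C f (pls C g h)"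
proof -
  have "f \<in> hom C (dm C f) (cd C f)" "g \<in> hom C (dm C f) (cd C f)" "h \<in> hom C (dm C f) (cd C f)"
    "dm C f \<in> obj C" "cd C f \<in> obj C"
    using assms by (auto simp: hom_iff)
  with p1i show ?thesis by blast
qed

lemma pls_zro: assumes "arr f" "dm C f = a" "cd C f = b" shows "pls C f (zro C a b) = f"
proof -
  have "f \<in> hom C a b" "a \<in> obj C" "b \<in> obj C"
    using assms by (auto simp: hom_iff)
  with p1i show ?thesis by blast
qed

lemma zro_pls: assumes "arr f" "dm C f = a" "cd C f = b" shows "pls C (zro C a b) f = f"
proof -
  have "a \<in> obj C" "b \<in> obj C" using assms by auto
  hence "pls C (zro C a b) f = pls C f (zro C a b)" using assms by (intro pls_comm) auto
  thus ?thesis using pls_zro assms by simp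
qed

lemma neg_ex: assumes "arr f" shows "\<exists>g. arr g \<and> dm C g = dm C f \<and> cd C g = cd C f \<and> pls C f g = zro C (dm C f) (cd C f)"
proof -
  have fh: "f \<in> hom C (dm C f) (cd C f)" and o: "dm C f \<in> obj C" "cd C f \<in> obj C"
    using assms by (auto simp: hom_iff)
  have H: "\<forall>z\<in>hom C (dm C f) (cd C f). \<exists>g\<in>hom C (dm C f) (cd C f). pls C z g = zro C (dm C f) (cd C f)"
    using p1i[OF o, THEN conjunct2, THEN conjunct2, THEN conjunct2, THEN conjunct2] .
  have "\<exists>g\<in>hom C (dm C f) (cd C f). pls C f g = zro C (dm C f) (cd C f)"
    using bspec[OF H fh] .
  then obtain g where "g \<in> hom C (dm C f) (cd C f)" "pls C f g = zro C (dm C f) (cd C f)" by blast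
  thus ?thesis by (auto simp: hom_iff)
qed

lemma distl: "arr f \<Longrightarrow> arr g \<Longrightarrow> arr h \<Longrightarrow> dm C g = dm C f \<Longrightarrow> cd C g = cd C f \<Longrightarrow> dm C h = cd C f \<Longrightarrow>
  cmp C h (pls C f g) = pls C (cmp C h f) (cmp C h g)"
  by (rule p2[rule_format, where a="dm C f" and b="cd C f" and c="cd C h"]) (auto simp: hom_iff)

lemma distr: "arr f \<Longrightarrow> arr g \<Longrightarrow> arr h \<Longrightarrow> dm C g = dm C f \<Longrightarrow> cd C g = cd C f \<Longrightarrow> cd C h = dm C f \<Longrightarrow>
  cmp C (pls C f g) h = pls C (cmp C f h) (cmp C g h)"
  by (rule p3[rule_format, where a="dm C h" and b="dm C f" and c="cd C f"]) (auto simp: hom_iff)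

lemma idem_zero: assumes "arr x" "pls C x x = x" shows "x = zro C (dm C x) (cd C x)"
proof -
  obtain y where y: "arr y" "dm C y = dm C x" "cd C y = cd C x" "pls C x y = zro C (dm C x) (cd C x)"
    using neg_ex[OF assms(1)] by blast
  have "zro C (dm C x) (cd C x) = pls C (pls C x x) y" using assms y by simp
  also have "\<dots> = pls C x (pls C x y)" by (rule pls_assoc) (simp_all add: assms y)
  also have "\<dots> = x" using assms y by (simp add: pls_zro[of x "dm C x" "cd C x"])
  finally show ?thesis by simp
qed

lemma cmp_zro: assumes "arr h" "a \<in> obj C" "dm C h = b" shows "cmp C h (zro C a b) = zro C a (cd C h)"
proof -
  have b: "b \<in> obj C" using assms by auto
  let ?x = "cmp C h (zro C a b)"
  have "pls C (zro C a b) (zro C a b) = zro C a b" using assms b by (simp add: pls_zro)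
  hence "?x = cmp C h (pls C (zro C a b) (zro C a b))" by simp
  also have "\<dots> = pls C ?x ?x" using assms b by (simp add: distl)
  finally have "pls C ?x ?x = ?x" by simp
  from idem_zero[OF _ this] show ?thesis using assms b by simp
qed

lemma zro_cmp: assumes "arr h" "c \<in> obj C" "cd C h = b" shows "cmp C (zro C b c) h = zro C (dm C h) c"
proof -
  have b: "b \<in> obj C" using assms by auto
  let ?x = "cmp C (zro C b c) h"
  have "pls C (zro C b c) (zro C b c) = zro C b c" using assms b by (simp add: pls_zro)
  hence "?x = cmp C (pls C (zro C b c) (zro C b c)) h" by simp
  also have "\<dots> = pls C ?x ?x" using assms b by (simp add: distr)
  finally have "pls C ?x ?x = ?x" by simp
  from idem_zero[OF _ this] show ?thesis using assms b by simp
qed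

end



context padd begin

lemma coker_epi:
  assumes "is_cokernel C d x" "arr u" "arr v" "dm C u = cd C d" "dm C v = cd C d" "cd C v = cd C u"
    "cmp C u d = cmp C v d"
  shows "u = v"
proof -
  have d: "arr d" "arr x" "cd C x = dm C d" "cmp C d x = zro C (dm C x) (cd C d)"
    using assms(1) unfolding is_cokernel_def by blast+
  have U: "\<forall>X\<in>obj C. \<forall>t\<in>hom C (cd C x) X. cmp C t x = zro C (dm C x) X \<longrightarrow>
        (\<exists>!w. w \<in> hom C (cd C d) X \<and> cmp C w d = t)"
    using assms(1) unfolding is_cokernel_def by blast
  let ?t = "cmp C u d"
  have "cmp C ?t x = cmp C u (cmp C d x)" by (rule assoc[symmetric]) (simp_all add: d assms(2-6))
  also have "\<dots> = zro C (dm C x) (cd C u)" using d assms(2-6) by (simp add: cmp_zro)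
  finally have t0: "cmp C ?t x = zro C (dm C x) (cd C u)" .
  have "?t \<in> hom C (cd C x) (cd C u)" using d assms by (simp add: hom_iff)
  with U t0 assms(2) have "\<exists>!w. w \<in> hom C (cd C d) (cd C u) \<and> cmp C w d = ?t" by auto
  moreover have "u \<in> hom C (cd C d) (cd C u)" "v \<in> hom C (cd C d) (cd C u)"
    using assms by (auto simp: hom_iff)
  ultimately show ?thesis using assms(7) by auto
qed

lemma coker_fac:
  assumes "is_cokernel C d x" "arr t" "dm C t = cd C x" "cmp C t x = zro C (dm C x) (cd C t)"
  shows "\<exists>w. arr w \<and> dm C w = cd C d \<and> cd C w = cd C t \<and> cmp C w d = t"
proof -
  have U: "\<forall>X\<in>obj C. \<forall>t\<in>hom C (cd C x) X. cmp C t x = zro C (dm C x) X \<longrightarrow>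
        (\<exists>!w. w \<in> hom C (cd C d) X \<and> cmp C w d = t)"
    using assms(1) unfolding is_cokernel_def by blast
  have "t \<in> hom C (cd C x) (cd C t)" using assms by (simp add: hom_iff)
  hence "\<exists>!w. w \<in> hom C (cd C d) (cd C t) \<and> cmp C w d = t"
    using U[rule_format, of "cd C t" t] assms by simp
  thus ?thesis by (auto simp: hom_iff)
qed

lemma ker_mono:
  assumes "is_kernel C x d" "arr u" "arr v" "cd C u = dm C x" "cd C v = dm C x" "dm C v = dm C u"
    "cmp C x u = cmp C x v"
  shows "u = v"
proof -
  have d: "arr d" "arr x" "cd C x = dm C d" "cmp C d x = zro C (dm C x) (cd C d)"
    using assms(1) unfolding is_kernel_def by blast+
  have U: "\<forall>X\<in>obj C. \<forall>t\<in>hom C X (dm C d). cmp C d t = zro C X (cd C d) \<longrightarrow>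
        (\<exists>!w. w \<in> hom C X (dm C x) \<and> cmp C x w = t)"
    using assms(1) unfolding is_kernel_def by blast
  let ?t = "cmp C x u"
  have "cmp C d ?t = cmp C (cmp C d x) u" by (rule assoc) (simp_all add: d assms(2-6))
  also have "\<dots> = zro C (dm C u) (cd C d)" using d assms(2-6) by (simp add: zro_cmp)
  finally have t0: "cmp C d ?t = zro C (dm C u) (cd C d)" .
  have "?t \<in> hom C (dm C u) (dm C d)" using d assms by (simp add: hom_iff)
  with U t0 assms(2) have "\<exists>!w. w \<in> hom C (dm C u) (dm C x) \<and> cmp C x w = ?t" by auto
  moreover have "u \<in> hom C (dm C u) (dm C x)" "v \<in> hom C (dm C u) (dm C x)"
    using assms by (auto simp: hom_iff)
  ultimately show ?thesis using assms(7) by auto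
qed

lemma ker_fac:
  assumes "is_kernel C x d" "arr t" "cd C t = dm C d" "cmp C d t = zro C (dm C t) (cd C d)"
  shows "\<exists>w. arr w \<and> cd C w = dm C x \<and> dm C w = dm C t \<and> cmp C x w = t"
proof -
  have U: "\<forall>X\<in>obj C. \<forall>t\<in>hom C X (dm C d). cmp C d t = zro C X (cd C d) \<longrightarrow>
        (\<exists>!w. w \<in> hom C X (dm C x) \<and> cmp C x w = t)"
    using assms(1) unfolding is_kernel_def by blast
  have "t \<in> hom C (dm C t) (dm C d)" using assms by (simp add: hom_iff)
  hence "\<exists>!w. w \<in> hom C (dm C t) (dm C x) \<and> cmp C x w = t"
    using U[rule_format, of "dm C t" t] assms by simp
  thus ?thesis by (auto simp: hom_iff)
qed

lemma po_fac:
  assumes "is_pushout C i t t' i'" "arr u" "arr v" "dm C u = cd C i" "dm C v = cd C t" "cd C v = cd C u"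
    "cmp C u i = cmp C v t"
  shows "\<exists>w. arr w \<and> dm C w = cd C t' \<and> cd C w = cd C u \<and> cmp C w t' = u \<and> cmp C w i' = v"
proof -
  have U: "\<forall>x\<in>obj C. \<forall>u\<in>hom C (cd C i) x. \<forall>v\<in>hom C (cd C t) x. cmp C u i = cmp C v t \<longrightarrow>
        (\<exists>!w. w \<in> hom C (cd C t') x \<and> cmp C w t' = u \<and> cmp C w i' = v)"
    using assms(1) unfolding is_pushout_def by blast
  have "u \<in> hom C (cd C i) (cd C u)" "v \<in> hom C (cd C t) (cd C u)" using assms by (auto simp: hom_iff)
  with U assms have "\<exists>w. w \<in> hom C (cd C t') (cd C u) \<and> cmp C w t' = u \<and> cmp C w i' = v"
    by (meson arr_cd)
  thus ?thesis by (auto simp: hom_iff)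
qed

lemma po_uniq:
  assumes "is_pushout C i t t' i'" "arr w1" "arr w2" "dm C w1 = cd C t'" "dm C w2 = cd C t'"
    "cd C w2 = cd C w1" "cmp C w1 t' = cmp C w2 t'" "cmp C w1 i' = cmp C w2 i'"
  shows "w1 = w2"
proof -
  have P: "arr i" "arr t" "arr t'" "arr i'" "dm C t = dm C i" "dm C t' = cd C i" "dm C i' = cd C t"
     "cd C t' = cd C i'" "cmp C t' i = cmp C i' t"
    using assms(1) unfolding is_pushout_def by blast+
  have U: "\<forall>x\<in>obj C. \<forall>u\<in>hom C (cd C i) x. \<forall>v\<in>hom C (cd C t) x. cmp C u i = cmp C v t \<longrightarrow>
        (\<exists>!w. w \<in> hom C (cd C t') x \<and> cmp C w t' = u \<and> cmp C w i' = v)"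
    using assms(1) unfolding is_pushout_def by blast
  let ?u = "cmp C w1 t'" and ?v = "cmp C w1 i'"
  have "cmp C ?u i = cmp C w1 (cmp C t' i)" by (rule assoc[symmetric]) (simp_all add: P assms(2-6))
  also have "\<dots> = cmp C w1 (cmp C i' t)" using P by simp
  also have "\<dots> = cmp C ?v t" by (rule assoc) (simp_all add: P assms(2-6))
  finally have e: "cmp C ?u i = cmp C ?v t" .
  have hu: "?u \<in> hom C (cd C i) (cd C w1)" and hv: "?v \<in> hom C (cd C t) (cd C w1)" using P assms(2-6) by (auto simp: hom_iff)
  have E: "\<exists>!w. w \<in> hom C (cd C t') (cd C w1) \<and> cmp C w t' = ?u \<and> cmp C w i' = ?v"
    using U[rule_format, OF arr_cd[OF assms(2)] hu hv e] .
  have "w1 \<in> hom C (cd C t') (cd C w1) \<and> cmp C w1 t' = ?u \<and> cmp C w1 i' = ?v"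
    using assms(2-6) by (auto simp: hom_iff)
  moreover have "w2 \<in> hom C (cd C t') (cd C w1) \<and> cmp C w2 t' = ?u \<and> cmp C w2 i' = ?v"
    using assms(2-8) by (auto simp: hom_iff)
  ultimately show ?thesis using E by (metis (no_types, lifting))
qed

lemma pb_fac:
  assumes "is_pullback C h t h' t'" "arr u" "arr v" "cd C u = dm C h" "cd C v = dm C t" "dm C v = dm C u"
    "cmp C h u = cmp C t v"
  shows "\<exists>w. arr w \<and> dm C w = dm C u \<and> cd C w = dm C h' \<and> cmp C t' w = u \<and> cmp C h' w = v"
proof -
  have U: "\<forall>x\<in>obj C. \<forall>u\<in>hom C x (dm C h). \<forall>v\<in>hom C x (dm C t). cmp C h u = cmp C t v \<longrightarrow>
        (\<exists>!w. w \<in> hom C x (dm C h') \<and> cmp C t' w = u \<and> cmp C h' w = v)"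
    using assms(1) unfolding is_pullback_def by blast
  have "u \<in> hom C (dm C u) (dm C h)" "v \<in> hom C (dm C u) (dm C t)" using assms by (auto simp: hom_iff)
  with U assms have "\<exists>w. w \<in> hom C (dm C u) (dm C h') \<and> cmp C t' w = u \<and> cmp C h' w = v"
    by (meson arr_dm)
  thus ?thesis by (auto simp: hom_iff)
qed

lemma pb_uniq:
  assumes "is_pullback C h t h' t'" "arr w1" "arr w2" "cd C w1 = dm C h'" "cd C w2 = dm C h'"
    "dm C w2 = dm C w1" "cmp C t' w1 = cmp C t' w2" "cmp C h' w1 = cmp C h' w2"
  shows "w1 = w2"
proof -
  have P: "arr h" "arr t" "arr h'" "arr t'" "cd C t = cd C h" "cd C h' = dm C t" "cd C t' = dm C h"
     "dm C h' = dm C t'" "cmp C h t' = cmp C t h'"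
    using assms(1) unfolding is_pullback_def by blast+
  have U: "\<forall>x\<in>obj C. \<forall>u\<in>hom C x (dm C h). \<forall>v\<in>hom C x (dm C t). cmp C h u = cmp C t v \<longrightarrow>
        (\<exists>!w. w \<in> hom C x (dm C h') \<and> cmp C t' w = u \<and> cmp C h' w = v)"
    using assms(1) unfolding is_pullback_def by blast
  let ?u = "cmp C t' w1" and ?v = "cmp C h' w1"
  have "cmp C h ?u = cmp C (cmp C h t') w1" by (rule assoc) (simp_all add: P assms(2-6))
  also have "\<dots> = cmp C (cmp C t h') w1" using P by simp
  also have "\<dots> = cmp C t ?v" by (rule assoc[symmetric]) (simp_all add: P assms(2-6))
  finally have e: "cmp C h ?u = cmp C t ?v" .
  have hu: "?u \<in> hom C (dm C w1) (dm C h)" and hv: "?v \<in> hom C (dm C w1) (dm C t)" using P assms(2-6) by (auto simp: hom_iff)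
  have E: "\<exists>!w. w \<in> hom C (dm C w1) (dm C h') \<and> cmp C t' w = ?u \<and> cmp C h' w = ?v"
    using U[rule_format, OF arr_dm[OF assms(2)] hu hv e] .
  have "w1 \<in> hom C (dm C w1) (dm C h') \<and> cmp C t' w1 = ?u \<and> cmp C h' w1 = ?v"
    using assms(2-6) by (auto simp: hom_iff)
  moreover have "w2 \<in> hom C (dm C w1) (dm C h') \<and> cmp C t' w2 = ?u \<and> cmp C h' w2 = ?v"
    using assms(2-8) by (auto simp: hom_iff)
  ultimately show ?thesis using E by (metis (no_types, lifting))
qed

lemma iso_intro:
  assumes "arr f" "arr g" "dm C g = cd C f" "cd C g = dm C f"
    "cmp C g f = idt C (dm C f)" "cmp C f g = idt C (cd C f)"
  shows "iso C f"
  unfolding iso_def using assms by (auto simp: hom_iff intro!: bexI[of _ g])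

lemma iso_idt: "a \<in> obj C \<Longrightarrow> iso C (idt C a)"
  by (rule iso_intro[of _ "idt C a"]) (auto simp: idl)

end



definition wei :: "('o, 'm) precat \<Rightarrow> ('m \<times> 'm) set \<Rightarrow> bool" where
  "wei C W \<longleftrightarrow>
     (\<forall>(i, d)\<in>W. kc_pair C i d) \<and>
     (\<forall>i d i' d' \<alpha> \<beta> \<gamma>. (i, d) \<in> W \<longrightarrow> i' \<in> mor C \<longrightarrow> d' \<in> mor C \<longrightarrow> cd C i' = dm C d' \<longrightarrow>
        \<alpha> \<in> hom C (dm C i) (dm C i') \<longrightarrow> \<beta> \<in> hom C (cd C i) (cd C i') \<longrightarrow>
        \<gamma> \<in> hom C (cd C d) (cd C d') \<longrightarrow> iso C \<alpha> \<longrightarrow> iso C \<beta> \<longrightarrow> iso C \<gamma> \<longrightarrow>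
        cmp C \<beta> i = cmp C i' \<alpha> \<longrightarrow> cmp C \<gamma> d = cmp C d' \<beta> \<longrightarrow> (i', d') \<in> W) \<and>
     (\<forall>i t. adm_monic W i \<longrightarrow> t \<in> mor C \<longrightarrow> dm C t = dm C i \<longrightarrow>
        (\<exists>t' i'. is_pushout C i t t' i' \<and> adm_monic W i')) \<and>
     (\<forall>h t. adm_epic W h \<longrightarrow> t \<in> mor C \<longrightarrow> cd C t = cd C h \<longrightarrow>
        (\<exists>h' t'. is_pullback C h t h' t' \<and> adm_epic W h'))"

lemma weakly_exact_wei: "weakly_exact C W \<Longrightarrow> wei C W"
  unfolding weakly_exact_def wei_def by (elim conjE) (intro conjI; assumption)

locale pwi = padd C for C :: "('o,'m) precat" +
  fixes W :: "('m \<times> 'm) set"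
  assumes wx: "wei C W"
begin

lemma W_kc: "(i,d) \<in> W \<Longrightarrow> is_kernel C i d \<and> is_cokernel C d i"
  using wx unfolding wei_def kc_pair_def by blast

lemma W_iso: "(i, d) \<in> W \<Longrightarrow> i' \<in> mor C \<Longrightarrow> d' \<in> mor C \<Longrightarrow> cd C i' = dm C d' \<Longrightarrow>
        \<alpha> \<in> hom C (dm C i) (dm C i') \<Longrightarrow> \<beta> \<in> hom C (cd C i) (cd C i') \<Longrightarrow>
        \<gamma> \<in> hom C (cd C d) (cd C d') \<Longrightarrow> iso C \<alpha> \<Longrightarrow> iso C \<beta> \<Longrightarrow> iso C \<gamma> \<Longrightarrow>
        cmp C \<beta> i = cmp C i' \<alpha> \<Longrightarrow> cmp C \<gamma> d = cmp C d' \<beta> \<Longrightarrow> (i', d') \<in> W"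
  using wx unfolding wei_def by blast

lemma E2: "adm_monic W i \<Longrightarrow> t \<in> mor C \<Longrightarrow> dm C t = dm C i \<Longrightarrow>
        (\<exists>t' i'. is_pushout C i t t' i' \<and> adm_monic W i')"
  using wx unfolding wei_def by blast

lemma E2op: "adm_epic W h \<Longrightarrow> t \<in> mor C \<Longrightarrow> cd C t = cd C h \<Longrightarrow>
        (\<exists>h' t'. is_pullback C h t h' t' \<and> adm_epic W h')"
  using wx unfolding wei_def by blast

lemma coker_swap:
  assumes xd: "(x,d) \<in> W" and c': "is_cokernel C d' x"
  shows "(x,d') \<in> W"
proof -
  have c: "is_cokernel C d x" using W_kc[OF xd] by blast
  have F1: "arr x" "arr d" "cd C x = dm C d" "cmp C d x = zro C (dm C x) (cd C d)"
    using c unfolding is_cokernel_def by blast+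
  have F2: "arr d'" "cd C x = dm C d'" "cmp C d' x = zro C (dm C x) (cd C d')"
    using c' unfolding is_cokernel_def by blast+
  obtain g where g: "arr g" "dm C g = cd C d" "cd C g = cd C d'" "cmp C g d = d'"
    using coker_fac[OF c F2(1)] F2 by auto
  obtain g' where g': "arr g'" "dm C g' = cd C d'" "cd C g' = cd C d" "cmp C g' d' = d"
    using coker_fac[OF c' F1(2)] F1 by auto
  have "cmp C (cmp C g' g) d = cmp C g' (cmp C g d)"
    by (rule assoc[symmetric]) (simp_all add: F1 g g')
  also have "\<dots> = cmp C (idt C (cd C d)) d" using g g' F1 by (simp add: idl)
  finally have X: "cmp C (cmp C g' g) d = cmp C (idt C (cd C d)) d" .
  have e1: "cmp C g' g = idt C (cd C d)"
    by (rule coker_epi[OF c _ _ _ _ _ X]) (simp_all add: F1 g g')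
  have "cmp C (cmp C g g') d' = cmp C g (cmp C g' d')"
    by (rule assoc[symmetric]) (simp_all add: F2 g g')
  also have "\<dots> = cmp C (idt C (cd C d')) d'" using g g' F2 by (simp add: idl)
  finally have X: "cmp C (cmp C g g') d' = cmp C (idt C (cd C d')) d'" .
  have e2: "cmp C g g' = idt C (cd C d')"
    by (rule coker_epi[OF c' _ _ _ _ _ X]) (simp_all add: F2 g g')
  have ig: "iso C g" by (rule iso_intro[of g g']) (simp_all add: g g' e1 e2)
  show ?thesis
  proof (rule W_iso[OF xd, of x d' "idt C (dm C x)" "idt C (cd C x)" g])
    show "cmp C (idt C (cd C x)) x = cmp C x (idt C (dm C x))" using F1 by (simp add: idl idr)
    show "cmp C g d = cmp C d' (idt C (cd C x))" using F2 g by (simp add: idr)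
  qed (use F1 F2 g ig iso_idt in \<open>auto simp: hom_iff\<close>)
qed

lemma ker_swap:
  assumes xd: "(x,d) \<in> W" and k': "is_kernel C x' d"
  shows "(x',d) \<in> W"
proof -
  have k: "is_kernel C x d" using W_kc[OF xd] by blast
  have F1: "arr x" "arr d" "cd C x = dm C d" "cmp C d x = zro C (dm C x) (cd C d)"
    using k unfolding is_kernel_def by blast+
  have F2: "arr x'" "cd C x' = dm C d" "cmp C d x' = zro C (dm C x') (cd C d)"
    using k' unfolding is_kernel_def by blast+
  obtain g where g: "arr g" "cd C g = dm C x'" "dm C g = dm C x" "cmp C x' g = x"
    using ker_fac[OF k' F1(1)] F1 by auto
  obtain g' where g': "arr g'" "cd C g' = dm C x" "dm C g' = dm C x'" "cmp C x g' = x'"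
    using ker_fac[OF k F2(1)] F2 by auto
  have "cmp C x (cmp C g' g) = cmp C (cmp C x g') g"
    by (rule assoc) (simp_all add: F1 g g')
  also have "\<dots> = cmp C x (idt C (dm C x))" using g g' F1 by (simp add: idr)
  finally have X: "cmp C x (cmp C g' g) = cmp C x (idt C (dm C x))" .
  have e1: "cmp C g' g = idt C (dm C x)"
    by (rule ker_mono[OF k _ _ _ _ _ X]) (simp_all add: F1 g g')
  have "cmp C x' (cmp C g g') = cmp C (cmp C x' g) g'"
    by (rule assoc) (simp_all add: F2 g g')
  also have "\<dots> = cmp C x' (idt C (dm C x'))" using g g' F2 by (simp add: idr)
  finally have X: "cmp C x' (cmp C g g') = cmp C x' (idt C (dm C x'))" .
  have e2: "cmp C g g' = idt C (dm C x')"
    by (rule ker_mono[OF k' _ _ _ _ _ X]) (simp_all add: F2 g g')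
  have ig: "iso C g" by (rule iso_intro[of g g']) (simp_all add: g g' e1 e2)
  show ?thesis
  proof (rule W_iso[OF xd, of x' d g "idt C (cd C x)" "idt C (cd C d)"])
    show "cmp C (idt C (cd C x)) x = cmp C x' g" using F1 g by (simp add: idl)
    show "cmp C (idt C (cd C d)) d = cmp C d (idt C (cd C x))" using F1 by (simp add: idl idr)
  qed (use F1 F2 g ig iso_idt in \<open>auto simp: hom_iff\<close>)
qed

lemma epi_tr:
  assumes xe: "(x,e) \<in> W" and th: "arr \<theta>" "arr \<theta>'" "dm C \<theta>' = cd C \<theta>" "cd C \<theta>' = dm C \<theta>"
    "cmp C \<theta>' \<theta> = idt C (dm C \<theta>)" "cmp C \<theta> \<theta>' = idt C (cd C \<theta>)" and the: "cd C \<theta> = dm C e"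
  shows "(cmp C \<theta>' x, cmp C e \<theta>) \<in> W"
proof -
  have F1: "arr x" "arr e" "cd C x = dm C e"
    using W_kc[OF xe] unfolding is_kernel_def by blast+
  have it: "iso C \<theta>'" by (rule iso_intro[of \<theta>' \<theta>]) (simp_all add: th)
  show ?thesis
  proof (rule W_iso[OF xe, of _ _ "idt C (dm C x)" \<theta>' "idt C (cd C e)"])
    show "cmp C \<theta>' x = cmp C (cmp C \<theta>' x) (idt C (dm C x))" using F1 th the by (simp add: idr)
    have "cmp C (cmp C e \<theta>) \<theta>' = cmp C e (cmp C \<theta> \<theta>')" by (rule assoc[symmetric]) (simp_all add: F1 th the)
    thus "cmp C (idt C (cd C e)) e = cmp C (cmp C e \<theta>) \<theta>'" using F1 th the by (simp add: idl idr)
  qed (use F1 th the it iso_idt in \<open>auto simp: hom_iff\<close>)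
qed

lemma mono_tr:
  assumes xe: "(x,e) \<in> W" and th: "arr \<theta>" "arr \<theta>'" "dm C \<theta>' = cd C \<theta>" "cd C \<theta>' = dm C \<theta>"
    "cmp C \<theta>' \<theta> = idt C (dm C \<theta>)" "cmp C \<theta> \<theta>' = idt C (cd C \<theta>)" and the: "dm C \<theta> = cd C x"
  shows "(cmp C \<theta> x, cmp C e \<theta>') \<in> W"
proof -
  have F1: "arr x" "arr e" "cd C x = dm C e"
    using W_kc[OF xe] unfolding is_kernel_def by blast+
  have it: "iso C \<theta>" by (rule iso_intro[of \<theta> \<theta>']) (simp_all add: th)
  show ?thesis
  proof (rule W_iso[OF xe, of _ _ "idt C (dm C x)" \<theta> "idt C (cd C e)"])
    show "cmp C \<theta> x = cmp C (cmp C \<theta> x) (idt C (dm C x))" using F1 th the by (simp add: idr)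
    have "cmp C (cmp C e \<theta>') \<theta> = cmp C e (cmp C \<theta>' \<theta>)" by (rule assoc[symmetric]) (simp_all add: F1 th the)
    thus "cmp C (idt C (cd C e)) e = cmp C (cmp C e \<theta>') \<theta>" using F1 th the by (simp add: idl idr)
  qed (use F1 th the it iso_idt in \<open>auto simp: hom_iff\<close>)
qed

end

definition wex :: "('o, 'm) precat \<Rightarrow> ('m \<times> 'm) set \<Rightarrow> bool" where
  "wex C W \<longleftrightarrow>
     (\<forall>(i, d)\<in>W. kc_pair C i d) \<and>
     (\<forall>x d d'. (x,d) \<in> W \<longrightarrow> is_cokernel C d' x \<longrightarrow> (x,d') \<in> W) \<and>
     (\<forall>x d x'. (x,d) \<in> W \<longrightarrow> is_kernel C x' d \<longrightarrow> (x',d) \<in> W) \<and>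
     (\<forall>x e \<theta> \<theta>'. (x,e) \<in> W \<longrightarrow> \<theta> \<in> mor C \<longrightarrow> \<theta>' \<in> mor C \<longrightarrow> dm C \<theta>' = cd C \<theta> \<longrightarrow> cd C \<theta>' = dm C \<theta> \<longrightarrow>
       cmp C \<theta>' \<theta> = idt C (dm C \<theta>) \<longrightarrow> cmp C \<theta> \<theta>' = idt C (cd C \<theta>) \<longrightarrow> cd C \<theta> = dm C e \<longrightarrow>
       (cmp C \<theta>' x, cmp C e \<theta>) \<in> W) \<and>
     (\<forall>x e \<theta> \<theta>'. (x,e) \<in> W \<longrightarrow> \<theta> \<in> mor C \<longrightarrow> \<theta>' \<in> mor C \<longrightarrow> dm C \<theta>' = cd C \<theta> \<longrightarrow> cd C \<theta>' = dm C \<theta> \<longrightarrow>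
       cmp C \<theta>' \<theta> = idt C (dm C \<theta>) \<longrightarrow> cmp C \<theta> \<theta>' = idt C (cd C \<theta>) \<longrightarrow> dm C \<theta> = cd C x \<longrightarrow>
       (cmp C \<theta> x, cmp C e \<theta>') \<in> W) \<and>
     (\<forall>i t. adm_monic W i \<longrightarrow> t \<in> mor C \<longrightarrow> dm C t = dm C i \<longrightarrow>
        (\<exists>t' i'. is_pushout C i t t' i' \<and> adm_monic W i')) \<and>
     (\<forall>h t. adm_epic W h \<longrightarrow> t \<in> mor C \<longrightarrow> cd C t = cd C h \<longrightarrow>
        (\<exists>h' t'. is_pullback C h t h' t' \<and> adm_epic W h'))"

lemma (in pwi) wei_wex: "wex C W"
  unfolding wex_def
  apply (intro conjI)
  subgoal using wx unfolding wei_def by blast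
  subgoal using coker_swap by blast
  subgoal using ker_swap by blast
  subgoal using epi_tr by blast
  subgoal using mono_tr by blast
  subgoal using E2 by blast
  subgoal using E2op by blast
  done

lemma weakly_exact_wex: "preadditive C \<Longrightarrow> weakly_exact C W \<Longrightarrow> wex C W"
  using pwi.wei_wex[of C W] weakly_exact_wei[of C W] unfolding pwi_def pwi_axioms_def padd_def by blast

locale pw = padd C for C :: "('o,'m) precat" +
  fixes W :: "('m \<times> 'm) set"
  assumes wx: "wex C W"
begin

lemma W_kc: "(i,d) \<in> W \<Longrightarrow> is_kernel C i d \<and> is_cokernel C d i"
  using wx[unfolded wex_def, THEN conjunct1] unfolding kc_pair_def by blast

lemma coker_swap: "(x,d) \<in> W \<Longrightarrow> is_cokernel C d' x \<Longrightarrow> (x,d') \<in> W"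
  using wx[unfolded wex_def, THEN conjunct2, THEN conjunct1] by blast

lemma ker_swap: "(x,d) \<in> W \<Longrightarrow> is_kernel C x' d \<Longrightarrow> (x',d) \<in> W"
  using wx[unfolded wex_def, THEN conjunct2, THEN conjunct2, THEN conjunct1] by blast

lemma epi_tr: "(x,e) \<in> W \<Longrightarrow> arr \<theta> \<Longrightarrow> arr \<theta>' \<Longrightarrow> dm C \<theta>' = cd C \<theta> \<Longrightarrow> cd C \<theta>' = dm C \<theta> \<Longrightarrow>
       cmp C \<theta>' \<theta> = idt C (dm C \<theta>) \<Longrightarrow> cmp C \<theta> \<theta>' = idt C (cd C \<theta>) \<Longrightarrow> cd C \<theta> = dm C e \<Longrightarrow>
       (cmp C \<theta>' x, cmp C e \<theta>) \<in> W"
  using wx[unfolded wex_def, THEN conjunct2, THEN conjunct2, THEN conjunct2, THEN conjunct1] by blast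

lemma E2: "adm_monic W i \<Longrightarrow> t \<in> mor C \<Longrightarrow> dm C t = dm C i \<Longrightarrow>
        (\<exists>t' i'. is_pushout C i t t' i' \<and> adm_monic W i')"
  using wx[unfolded wex_def, THEN conjunct2, THEN conjunct2, THEN conjunct2, THEN conjunct2, THEN conjunct2, THEN conjunct1] by blast

lemma E2op: "adm_epic W h \<Longrightarrow> t \<in> mor C \<Longrightarrow> cd C t = cd C h \<Longrightarrow>
        (\<exists>h' t'. is_pullback C h t h' t' \<and> adm_epic W h')"
  using wx[unfolded wex_def, THEN conjunct2, THEN conjunct2, THEN conjunct2, THEN conjunct2, THEN conjunct2, THEN conjunct2] by blast

lemma ker_transport:
  assumes xe: "(x,e) \<in> W" and th: "arr \<theta>" "arr \<theta>'" "dm C \<theta>' = cd C \<theta>" "cd C \<theta>' = dm C \<theta>"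
    "cmp C \<theta>' \<theta> = idt C (dm C \<theta>)" "cmp C \<theta> \<theta>' = idt C (cd C \<theta>)"
    and the: "cd C \<theta> = dm C e" and ek: "cmp C e \<theta> = k" and ik: "is_kernel C i k"
  shows "(i,k) \<in> W"
  using ker_swap[OF epi_tr[OF xe th the] ik[folded ek]] ek by simp

end



context pw begin

lemma part1:
  assumes i: "arr i" and j: "arr j" and ij: "cd C i = dm C j" and hc: "has_cokernel C i"
    and am: "adm_monic W (cmp C j i)"
  shows "adm_monic W i"
proof -
  define m where "m = cmp C j i"
  define A where "A = dm C i"
  define B where "B = cd C i"
  define Cc where "Cc = cd C j"
  have o1: "A \<in> obj C" "B \<in> obj C" "Cc \<in> obj C" using i j by (auto simp: A_def B_def Cc_def)
  have F0: "dm C i = A" "cd C i = B" "dm C j = B" "cd C j = Cc" using ij by (simp_all add: A_def B_def Cc_def)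
  have mF: "arr m" "dm C m = A" "cd C m = Cc" using i j F0 by (simp_all add: m_def)
  obtain p where mp: "(m,p) \<in> W" using am unfolding m_def adm_monic_def by blast
  have kp: "is_kernel C m p" "is_cokernel C p m" using W_kc[OF mp] by blast+
  define Q where "Q = cd C p"
  have pF: "arr p" "dm C p = Cc" "cd C p = Q" "Q \<in> obj C"
    using kp(1) mF unfolding is_kernel_def Q_def by auto
  have pm: "cmp C p m = zro C A Q" using kp(1) mF unfolding is_kernel_def Q_def by auto
  obtain k where ck: "is_cokernel C k i" using hc unfolding has_cokernel_def by blast
  define D where "D = cd C k"
  have kF: "arr k" "dm C k = B" "cd C k = D" "D \<in> obj C"
    using ck F0 unfolding is_cokernel_def D_def by auto
  have ki: "cmp C k i = zro C A D" using ck F0 unfolding is_cokernel_def D_def by auto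
  note F = o1 F0 mF pF kF
  have "cmp C (cmp C p j) i = cmp C p m" unfolding m_def by (rule assoc[symmetric]) (simp_all add: F i j)
  also have "\<dots> = zro C (dm C i) (cd C (cmp C p j))" using pm F i j by simp
  finally obtain jb where jbF: "arr jb" "dm C jb = D" "cd C jb = Q" and jbk: "cmp C jb k = cmp C p j"
    using coker_fac[OF ck, of "cmp C p j"] F i j by auto
  note F = F jbF
  obtain t' i' where po: "is_pushout C m i t' i'" and ai': "adm_monic W i'"
    using E2[of m i] am i F unfolding m_def by auto
  define S where "S = cd C i'"
  have poF: "arr t'" "arr i'" "dm C t' = Cc" "dm C i' = B" "cd C t' = S" "cd C i' = S" "S \<in> obj C"
    using po F unfolding is_pushout_def S_def by auto
  have tm: "cmp C t' m = cmp C i' i" using po unfolding is_pushout_def by blast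
  note F = F poF i j
  obtain \<rho> where rF: "arr \<rho>" "dm C \<rho> = S" "cd C \<rho> = Q" and rt: "cmp C \<rho> t' = p" and ri: "cmp C \<rho> i' = zro C B Q"
    using po_fac[OF po, of p "zro C B Q"] F pm by (auto simp: zro_cmp)
  obtain \<sigma> where sF: "arr \<sigma>" "dm C \<sigma> = S" "cd C \<sigma> = D" and st: "cmp C \<sigma> t' = zro C Cc D" and si: "cmp C \<sigma> i' = k"
    using po_fac[OF po, of "zro C Cc D" k] F ki by (auto simp: zro_cmp)
  obtain \<pi> where qF: "arr \<pi>" "dm C \<pi> = S" "cd C \<pi> = Cc" and qt: "cmp C \<pi> t' = idt C Cc" and qi: "cmp C \<pi> i' = j"
    using po_fac[OF po, of "idt C Cc" j] F by (auto simp: idl m_def)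
  note F = F rF sF qF
  have rc: "is_cokernel C \<rho> i'"
    unfolding is_cokernel_def
  proof (intro conjI ballI impI)
    show "arr i'" "arr \<rho>" "cd C i' = dm C \<rho>" using F by simp_all
    show "cmp C \<rho> i' = zro C (dm C i') (cd C \<rho>)" using F ri by simp
  next
    fix X t assume X: "X \<in> obj C" and t: "t \<in> hom C (cd C i') X" and ti: "cmp C t i' = zro C (dm C i') X"
    have tF: "arr t" "dm C t = S" "cd C t = X" using t F by (auto simp: hom_iff)
    have "cmp C (cmp C t t') m = cmp C t (cmp C t' m)" by (rule assoc[symmetric]) (simp_all add: F tF)
    also have "\<dots> = cmp C t (cmp C i' i)" using tm by simp
    also have "\<dots> = cmp C (cmp C t i') i" by (rule assoc) (simp_all add: F tF)
    also have "\<dots> = zro C (dm C m) (cd C (cmp C t t'))" using ti F tF X by (simp add: zro_cmp)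
    finally obtain g where gF: "arr g" "dm C g = Q" "cd C g = X" and gp: "cmp C g p = cmp C t t'"
      using coker_fac[OF kp(2), of "cmp C t t'"] F tF by auto
    have "cmp C g \<rho> = t"
    proof (rule po_uniq[OF po])
      show "cmp C (cmp C g \<rho>) t' = cmp C t t'"
        using gp rt assoc[of t' \<rho> g, symmetric] F gF by simp
      have "cmp C (cmp C g \<rho>) i' = cmp C g (cmp C \<rho> i')" by (rule assoc[symmetric]) (simp_all add: F gF)
      also have "\<dots> = cmp C t i'" using ri ti F gF by (simp add: cmp_zro)
      finally show "cmp C (cmp C g \<rho>) i' = cmp C t i'" .
    qed (simp_all add: F gF tF)
    hence ex: "g \<in> hom C (cd C \<rho>) X \<and> cmp C g \<rho> = t" using F gF by (simp add: hom_iff)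
    show "\<exists>!u. u \<in> hom C (cd C \<rho>) X \<and> cmp C u \<rho> = t"
    proof (rule ex1I[of _ g])
      show "g \<in> hom C (cd C \<rho>) X \<and> cmp C g \<rho> = t" by (rule ex)
    next
      fix u assume u: "u \<in> hom C (cd C \<rho>) X \<and> cmp C u \<rho> = t"
      have uF: "arr u" "dm C u = Q" "cd C u = X" using u F by (auto simp: hom_iff)
      have "cmp C u p = cmp C (cmp C u \<rho>) t'"
        using rt assoc[of t' \<rho> u] F uF by simp
      also have "\<dots> = cmp C (cmp C g \<rho>) t'" using u ex by simp
      also have "\<dots> = cmp C g p" using rt assoc[of t' \<rho> g] F gF by simp
      finally have X2: "cmp C u p = cmp C g p" .
      show "u = g" by (rule coker_epi[OF kp(2) _ _ _ _ _ X2]) (simp_all add: F uF gF)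
    qed
  qed
  have ki': "is_kernel C i' \<rho>"
  proof -
    obtain d' where "(i', d') \<in> W" using ai' unfolding adm_monic_def by blast
    from coker_swap[OF this rc] show ?thesis using W_kc by blast
  qed
  obtain jn where jnF: "arr jn" "dm C jn = B" "cd C jn = Cc" and jjn: "pls C j jn = zro C B Cc"
    using neg_ex[OF j] F by auto
  note F = F jnF
  have "cmp C (pls C i' (cmp C t' jn)) i = pls C (cmp C i' i) (cmp C (cmp C t' jn) i)"
    by (rule distr) (simp_all add: F)
  also have "\<dots> = pls C (cmp C t' (cmp C j i)) (cmp C t' (cmp C jn i))"
    using tm assoc[of i jn t'] F by (simp add: m_def)
  also have "\<dots> = cmp C t' (pls C (cmp C j i) (cmp C jn i))"
    by (rule distl[symmetric]) (simp_all add: F)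
  also have "\<dots> = cmp C t' (cmp C (pls C j jn) i)"
    using distr[of j jn i] F by simp
  also have "\<dots> = zro C (dm C i) (cd C (pls C i' (cmp C t' jn)))"
    using jjn F by (simp add: zro_cmp cmp_zro)
  finally obtain \<delta> where dF: "arr \<delta>" "dm C \<delta> = D" "cd C \<delta> = S" and dk: "cmp C \<delta> k = pls C i' (cmp C t' jn)"
    using coker_fac[OF ck, of "pls C i' (cmp C t' jn)"] F by auto
  note F = F dF
  have "cmp C (cmp C \<sigma> \<delta>) k = cmp C \<sigma> (pls C i' (cmp C t' jn))"
    using dk assoc[of k \<delta> \<sigma>] F by simp
  also have "\<dots> = pls C (cmp C \<sigma> i') (cmp C \<sigma> (cmp C t' jn))" by (rule distl) (simp_all add: F)
  also have "\<dots> = pls C k (cmp C (cmp C \<sigma> t') jn)" using si assoc[of jn t' \<sigma>] F by simp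
  also have "\<dots> = cmp C (idt C D) k" using st F by (simp add: zro_cmp pls_zro idl)
  finally have X: "cmp C (cmp C \<sigma> \<delta>) k = cmp C (idt C D) k" .
  have sd: "cmp C \<sigma> \<delta> = idt C D" by (rule coker_epi[OF ck _ _ _ _ _ X]) (simp_all add: F)
  have "cmp C (cmp C \<pi> \<delta>) k = cmp C \<pi> (pls C i' (cmp C t' jn))"
    using dk assoc[of k \<delta> \<pi>] F by simp
  also have "\<dots> = pls C (cmp C \<pi> i') (cmp C \<pi> (cmp C t' jn))" by (rule distl) (simp_all add: F)
  also have "\<dots> = pls C j (cmp C (cmp C \<pi> t') jn)" using qi assoc[of jn t' \<pi>] F by simp
  also have "\<dots> = cmp C (zro C D Cc) k" using qt jjn F by (simp add: zro_cmp idl)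
  finally have X: "cmp C (cmp C \<pi> \<delta>) k = cmp C (zro C D Cc) k" .
  have qd: "cmp C \<pi> \<delta> = zro C D Cc" by (rule coker_epi[OF ck _ _ _ _ _ X]) (simp_all add: F)
  have "cmp C (pls C (cmp C \<rho> \<delta>) jb) k = pls C (cmp C (cmp C \<rho> \<delta>) k) (cmp C jb k)"
    by (rule distr) (simp_all add: F)
  also have "\<dots> = pls C (cmp C \<rho> (pls C i' (cmp C t' jn))) (cmp C p j)"
    using dk jbk assoc[of k \<delta> \<rho>] F by simp
  also have "\<dots> = pls C (pls C (cmp C \<rho> i') (cmp C (cmp C \<rho> t') jn)) (cmp C p j)"
    using distl[of i' "cmp C t' jn" \<rho>] assoc[of jn t' \<rho>] F by simp
  also have "\<dots> = pls C (cmp C p jn) (cmp C p j)"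
    using ri rt F by (simp add: zro_pls)
  also have "\<dots> = cmp C p (pls C jn j)" by (rule distl[symmetric]) (simp_all add: F)
  also have "\<dots> = cmp C p (pls C j jn)" using pls_comm[of jn j] F by simp
  also have "\<dots> = cmp C (zro C D Q) k" using jjn F by (simp add: zro_cmp cmp_zro)
  finally have X: "cmp C (pls C (cmp C \<rho> \<delta>) jb) k = cmp C (zro C D Q) k" .
  have rdj: "pls C (cmp C \<rho> \<delta>) jb = zro C D Q" by (rule coker_epi[OF ck _ _ _ _ _ X]) (simp_all add: F)
  have idS: "pls C (cmp C t' \<pi>) (cmp C \<delta> \<sigma>) = idt C S"
  proof (rule po_uniq[OF po])
    have "cmp C (pls C (cmp C t' \<pi>) (cmp C \<delta> \<sigma>)) t' = pls C (cmp C (cmp C t' \<pi>) t') (cmp C (cmp C \<delta> \<sigma>) t')"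
      by (rule distr) (simp_all add: F)
    also have "\<dots> = pls C (cmp C t' (cmp C \<pi> t')) (cmp C \<delta> (cmp C \<sigma> t'))"
      using assoc[of t' \<pi> t'] assoc[of t' \<sigma> \<delta>] F by simp
    also have "\<dots> = cmp C (idt C S) t'" using qt st F by (simp add: idl idr cmp_zro pls_zro)
    finally show "cmp C (pls C (cmp C t' \<pi>) (cmp C \<delta> \<sigma>)) t' = cmp C (idt C S) t'" .
    have "cmp C (pls C (cmp C t' \<pi>) (cmp C \<delta> \<sigma>)) i' = pls C (cmp C (cmp C t' \<pi>) i') (cmp C (cmp C \<delta> \<sigma>) i')"
      by (rule distr) (simp_all add: F)
    also have "\<dots> = pls C (cmp C t' (cmp C \<pi> i')) (cmp C \<delta> (cmp C \<sigma> i'))"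
      using assoc[of i' \<pi> t'] assoc[of i' \<sigma> \<delta>] F by simp
    also have "\<dots> = pls C (cmp C t' j) (pls C i' (cmp C t' jn))" using qi si dk by simp
    also have "\<dots> = pls C i' (pls C (cmp C t' j) (cmp C t' jn))"
      using pls_comm[of "cmp C t' j" i'] pls_assoc[of i' "cmp C t' j" "cmp C t' jn"]
        pls_assoc[of "cmp C t' j" i' "cmp C t' jn"] F by simp
    also have "\<dots> = pls C i' (cmp C t' (pls C j jn))" using distl[of j jn t'] F by simp
    also have "\<dots> = cmp C (idt C S) i'" using jjn F by (simp add: cmp_zro pls_zro idl)
    finally show "cmp C (pls C (cmp C t' \<pi>) (cmp C \<delta> \<sigma>)) i' = cmp C (idt C S) i'" .
  qed (simp_all add: F)
  have dec: "cmp C i' w = pls C (cmp C t' (cmp C j w)) (cmp C \<delta> (cmp C k w))"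
    if w: "arr w" "cd C w = B" for w
  proof -
    have "cmp C i' w = cmp C (idt C S) (cmp C i' w)" using F w by (simp add: idl)
    also have "\<dots> = cmp C (pls C (cmp C t' \<pi>) (cmp C \<delta> \<sigma>)) (cmp C i' w)" using idS by simp
    also have "\<dots> = pls C (cmp C (cmp C t' \<pi>) (cmp C i' w)) (cmp C (cmp C \<delta> \<sigma>) (cmp C i' w))"
      by (rule distr) (simp_all add: F w)
    also have "\<dots> = pls C (cmp C t' (cmp C (cmp C \<pi> i') w)) (cmp C \<delta> (cmp C (cmp C \<sigma> i') w))"
      using assoc[of "cmp C i' w" \<pi> t'] assoc[of "cmp C i' w" \<sigma> \<delta>] assoc[of w i' \<pi>] assoc[of w i' \<sigma>] F w
      by simp
    also have "\<dots> = pls C (cmp C t' (cmp C j w)) (cmp C \<delta> (cmp C k w))" using qi si by simp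
    finally show ?thesis .
  qed
  have pbB: "is_pullback C p jb k j"
    unfolding is_pullback_def
  proof (intro conjI ballI impI)
    show "arr p" "arr jb" "arr k" "arr j" "cd C jb = cd C p" "cd C k = dm C jb" "cd C j = dm C p"
      "dm C k = dm C j" using F by simp_all
    show "cmp C p j = cmp C jb k" using jbk by simp
  next
    fix X u v assume X: "X \<in> obj C" and u: "u \<in> hom C X (dm C p)" and v: "v \<in> hom C X (dm C jb)"
      and e: "cmp C p u = cmp C jb v"
    have uF: "arr u" "dm C u = X" "cd C u = Cc" using u F by (auto simp: hom_iff)
    have vF: "arr v" "dm C v = X" "cd C v = D" using v F by (auto simp: hom_iff)
    define s where "s = pls C (cmp C t' u) (cmp C \<delta> v)"
    have sF: "arr s" "dm C s = X" "cd C s = S" using F uF vF by (simp_all add: s_def)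
    have "cmp C \<rho> s = pls C (cmp C \<rho> (cmp C t' u)) (cmp C \<rho> (cmp C \<delta> v))"
      unfolding s_def by (rule distl) (simp_all add: F uF vF)
    also have "\<dots> = pls C (cmp C jb v) (cmp C (cmp C \<rho> \<delta>) v)"
      using assoc[of u t' \<rho>] assoc[of v \<delta> \<rho>] rt e F uF vF by simp
    also have "\<dots> = cmp C (pls C jb (cmp C \<rho> \<delta>)) v" by (rule distr[symmetric]) (simp_all add: F vF)
    also have "\<dots> = cmp C (pls C (cmp C \<rho> \<delta>) jb) v" using pls_comm[of jb "cmp C \<rho> \<delta>"] F by simp
    also have "\<dots> = zro C (dm C s) (cd C \<rho>)" using rdj F vF sF by (simp add: zro_cmp)
    finally obtain w where wF: "arr w" "cd C w = B" "dm C w = X" and iw: "cmp C i' w = s"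
      using ker_fac[OF ki', of s] F sF by auto
    have kw: "cmp C k w = v"
    proof -
      have "cmp C k w = cmp C \<sigma> s" using si iw assoc[of w i' \<sigma>] F wF by simp
      also have "\<dots> = pls C (cmp C \<sigma> (cmp C t' u)) (cmp C \<sigma> (cmp C \<delta> v))"
        unfolding s_def by (rule distl) (simp_all add: F uF vF)
      also have "\<dots> = v" using assoc[of u t' \<sigma>] assoc[of v \<delta> \<sigma>] st sd F uF vF
        by (simp add: zro_cmp idl zro_pls)
      finally show ?thesis .
    qed
    have jw: "cmp C j w = u"
    proof -
      have "cmp C j w = cmp C \<pi> s" using qi iw assoc[of w i' \<pi>] F wF by simp
      also have "\<dots> = pls C (cmp C \<pi> (cmp C t' u)) (cmp C \<pi> (cmp C \<delta> v))"
        unfolding s_def by (rule distl) (simp_all add: F uF vF)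
      also have "\<dots> = u" using assoc[of u t' \<pi>] assoc[of v \<delta> \<pi>] qt qd F uF vF
        by (simp add: zro_cmp idl pls_zro)
      finally show ?thesis .
    qed
    show "\<exists>!w. w \<in> hom C X (dm C k) \<and> cmp C j w = u \<and> cmp C k w = v"
    proof (rule ex1I[of _ w])
      show "w \<in> hom C X (dm C k) \<and> cmp C j w = u \<and> cmp C k w = v" using wF jw kw F by (simp add: hom_iff)
    next
      fix w' assume w': "w' \<in> hom C X (dm C k) \<and> cmp C j w' = u \<and> cmp C k w' = v"
      have w'F: "arr w'" "cd C w' = B" "dm C w' = X" using w' F by (auto simp: hom_iff)
      have X2: "cmp C i' w' = cmp C i' w" using dec[OF w'F(1,2)] w' iw s_def by simp
      show "w' = w" by (rule ker_mono[OF ki' _ _ _ _ _ X2]) (simp_all add: F wF w'F)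
    qed
  qed
  have ik: "is_kernel C i k"
    unfolding is_kernel_def
  proof (intro conjI ballI impI)
    show "arr i" "arr k" "cd C i = dm C k" using F by simp_all
    show "cmp C k i = zro C (dm C i) (cd C k)" using ki F by simp
  next
    fix X t assume X: "X \<in> obj C" and t: "t \<in> hom C X (dm C k)" and kt: "cmp C k t = zro C X (cd C k)"
    have tF: "arr t" "dm C t = X" "cd C t = B" using t F by (auto simp: hom_iff)
    have "cmp C p (cmp C j t) = cmp C (cmp C jb k) t" using jbk assoc[of t j p] F tF by simp
    also have "\<dots> = cmp C jb (cmp C k t)" by (rule assoc[symmetric]) (simp_all add: F tF)
    also have "\<dots> = zro C (dm C (cmp C j t)) (cd C p)" using kt F tF X by (simp add: cmp_zro)
    finally obtain u where uF: "arr u" "cd C u = A" "dm C u = X" and mu: "cmp C m u = cmp C j t"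
      using ker_fac[OF kp(1), of "cmp C j t"] F tF by auto
    have iu: "cmp C i u = t"
    proof (rule pb_uniq[OF pbB])
      show "cmp C j (cmp C i u) = cmp C j t" using mu assoc[of u i j] F uF by (simp add: m_def)
      show "cmp C k (cmp C i u) = cmp C k t" using ki kt assoc[of u i k] F uF X by (simp add: zro_cmp)
    qed (simp_all add: F uF tF)
    show "\<exists>!u. u \<in> hom C X (dm C i) \<and> cmp C i u = t"
    proof (rule ex1I[of _ u])
      show "u \<in> hom C X (dm C i) \<and> cmp C i u = t" using uF iu F by (simp add: hom_iff)
    next
      fix u' assume u': "u' \<in> hom C X (dm C i) \<and> cmp C i u' = t"
      have u'F: "arr u'" "cd C u' = A" "dm C u' = X" using u' F by (auto simp: hom_iff)
      have X2: "cmp C m u' = cmp C m u"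
        using assoc[of u' i j] assoc[of u i j] u' iu F uF u'F by (simp add: m_def)
      show "u' = u" by (rule ker_mono[OF kp(1) _ _ _ _ _ X2]) (simp_all add: F uF u'F)
    qed
  qed
  have "adm_epic W p" using mp unfolding adm_epic_def by blast
  then obtain h' t'' where pbP: "is_pullback C p jb h' t''" and ah: "adm_epic W h'"
    using E2op[of p jb] F by auto
  define P where "P = dm C h'"
  have pbF: "arr h'" "arr t''" "dm C h' = P" "dm C t'' = P" "cd C h' = D" "cd C t'' = Cc" "P \<in> obj C"
    using pbP F unfolding is_pullback_def P_def by auto
  have pth: "cmp C p t'' = cmp C jb h'" using pbP unfolding is_pullback_def by blast
  note F = F pbF
  obtain \<theta> where thF: "arr \<theta>" "dm C \<theta> = B" "cd C \<theta> = P" and th1: "cmp C t'' \<theta> = j" and th2: "cmp C h' \<theta> = k"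
    using pb_fac[OF pbP, of j k] F jbk by auto
  obtain \<theta>' where th'F: "arr \<theta>'" "dm C \<theta>' = P" "cd C \<theta>' = B" and th1': "cmp C j \<theta>' = t''" and th2': "cmp C k \<theta>' = h'"
    using pb_fac[OF pbB, of t'' h'] F pth by auto
  note F = F thF th'F
  have e1: "cmp C \<theta>' \<theta> = idt C B"
  proof (rule pb_uniq[OF pbB])
    show "cmp C j (cmp C \<theta>' \<theta>) = cmp C j (idt C B)" using assoc[of \<theta> \<theta>' j] th1 th1' F by (simp add: idr)
    show "cmp C k (cmp C \<theta>' \<theta>) = cmp C k (idt C B)" using assoc[of \<theta> \<theta>' k] th2 th2' F by (simp add: idr)
  qed (simp_all add: F)
  have e2: "cmp C \<theta> \<theta>' = idt C P"
  proof (rule pb_uniq[OF pbP])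
    show "cmp C t'' (cmp C \<theta> \<theta>') = cmp C t'' (idt C P)" using assoc[of \<theta>' \<theta> t''] th1 th1' F by (simp add: idr)
    show "cmp C h' (cmp C \<theta> \<theta>') = cmp C h' (idt C P)" using assoc[of \<theta>' \<theta> h'] th2 th2' F by (simp add: idr)
  qed (simp_all add: F)
  obtain x0 where "(x0, h') \<in> W" using ah unfolding adm_epic_def by blast
  from ker_transport[OF this thF(1) th'F(1) _ _ _ _ _ th2 ik]
  have "(i, k) \<in> W" using F e1 e2 by simp
  thus ?thesis unfolding adm_monic_def by blast
qed

end



definition opc :: "('o, 'm) precat \<Rightarrow> ('o, 'm) precat" where
  "opc C = \<lparr>obj = obj C, mor = mor C, dm = cd C, cd = dm C, cmp = (\<lambda>g f. cmp C f g),
     idt = idt C, pls = pls C, zro = (\<lambda>a b. zro C b a)\<rparr>"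

lemma opc_sel[simp]: "obj (opc C) = obj C" "mor (opc C) = mor C" "dm (opc C) = cd C" "cd (opc C) = dm C"
  "cmp (opc C) g f = cmp C f g" "idt (opc C) = idt C" "pls (opc C) = pls C" "zro (opc C) a b = zro C b a"
  by (simp_all add: opc_def)

lemma opc_opc[simp]: "opc (opc C) = C"
  by (cases C) (simp add: opc_def)

lemma hom_opc[simp]: "hom (opc C) a b = hom C b a"
  by (auto simp: hom_def)

lemma (in padd) preadditive_opc: "preadditive (opc C)"
proof -
  have cat': "category (opc C)"
    unfolding category_def
  proof (intro conjI ballI allI impI)
    fix f assume "f \<in> mor (opc C)" thus "dm (opc C) f \<in> obj (opc C)" "cd (opc C) f \<in> obj (opc C)" by auto
  next
    fix a assume "a \<in> obj (opc C)" thus "idt (opc C) a \<in> hom (opc C) a a" by (simp add: hom_iff)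
  next
    fix a b c f g assume "f \<in> hom (opc C) a b" "g \<in> hom (opc C) b c"
    thus "cmp (opc C) g f \<in> hom (opc C) a c" by (auto simp: hom_iff)
  next
    fix a b c d f g h assume "f \<in> hom (opc C) a b" "g \<in> hom (opc C) b c" "h \<in> hom (opc C) c d"
    thus "cmp (opc C) h (cmp (opc C) g f) = cmp (opc C) (cmp (opc C) h g) f"
      by (auto simp: hom_iff assoc)
  next
    fix a b f assume "f \<in> hom (opc C) a b"
    thus "cmp (opc C) (idt (opc C) b) f = f" "cmp (opc C) f (idt (opc C) a) = f"
      by (auto simp: hom_iff idl idr)
  qed
  show ?thesis
    unfolding preadditive_def
  proof (intro conjI ballI allI impI cat')
    fix a b assume "a \<in> obj (opc C)" "b \<in> obj (opc C)"
    thus "zro (opc C) a b \<in> hom (opc C) a b" by (simp add: hom_iff)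
  next
    fix a b f g assume "f \<in> hom (opc C) a b" "g \<in> hom (opc C) a b"
    thus "pls (opc C) f g \<in> hom (opc C) a b" "pls (opc C) f g = pls (opc C) g f"
      by (auto simp: hom_iff pls_comm)
  next
    fix a b f g h assume "f \<in> hom (opc C) a b" "g \<in> hom (opc C) a b" "h \<in> hom (opc C) a b"
    thus "pls (opc C) (pls (opc C) f g) h = pls (opc C) f (pls (opc C) g h)"
      by (auto simp: hom_iff pls_assoc)
  next
    fix a b f assume "a \<in> obj (opc C)" "b \<in> obj (opc C)" "f \<in> hom (opc C) a b"
    thus "pls (opc C) f (zro (opc C) a b) = f" by (auto simp: hom_iff pls_zro)
  next
    fix a b f assume "f \<in> hom (opc C) a b"
    then obtain g where "arr g" "dm C g = dm C f" "cd C g = cd C f" "pls C f g = zro C (dm C f) (cd C f)"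
      using neg_ex by (auto simp: hom_iff)
    thus "\<exists>g\<in>hom (opc C) a b. pls (opc C) f g = zro (opc C) a b"
      using \<open>f \<in> hom (opc C) a b\<close> by (auto simp: hom_iff)
  next
    fix a b c f g h assume "f \<in> hom (opc C) a b" "g \<in> hom (opc C) a b" "h \<in> hom (opc C) b c"
    thus "cmp (opc C) h (pls (opc C) f g) = pls (opc C) (cmp (opc C) h f) (cmp (opc C) h g)"
      by (auto simp: hom_iff distr)
  next
    fix a b c f g h assume "h \<in> hom (opc C) a b" "f \<in> hom (opc C) b c" "g \<in> hom (opc C) b c"
    thus "cmp (opc C) (pls (opc C) f g) h = pls (opc C) (cmp (opc C) f h) (cmp (opc C) g h)"
      by (auto simp: hom_iff distl)
  qed
qed

lemma kernel_opc: "is_kernel (opc C) i d = is_cokernel C i d"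
  unfolding is_kernel_def is_cokernel_def by auto

lemma cokernel_opc: "is_cokernel (opc C) d i = is_kernel C d i"
  using kernel_opc[of "opc C" d i] by simp

lemma pushout_opc: "is_pushout (opc C) i t t' i' = is_pullback C i t i' t'"
proof
  assume H: "is_pushout (opc C) i t t' i'"
  hence e: "dm C t' = dm C i'" unfolding is_pushout_def by simp
  show "is_pullback C i t i' t'" using H unfolding is_pushout_def is_pullback_def opc_sel hom_opc unfolding e by simp
next
  assume H: "is_pullback C i t i' t'"
  hence e: "dm C t' = dm C i'" unfolding is_pullback_def by simp
  show "is_pushout (opc C) i t t' i'" using H unfolding is_pushout_def is_pullback_def opc_sel hom_opc unfolding e by simp
qed

lemma pullback_opc: "is_pullback (opc C) h t h' t' = is_pushout C h t t' h'"
  using pushout_opc[of "opc C" h t t' h'] by simp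

lemma adm_conv: "adm_monic (W\<inverse>) x = adm_epic W x" "adm_epic (W\<inverse>) x = adm_monic W x"
  unfolding adm_monic_def adm_epic_def by auto

lemma kc_opc: "kc_pair (opc C) i d = kc_pair C d i"
  unfolding kc_pair_def kernel_opc cokernel_opc by auto


lemma wex_opc: assumes w: "wex C W" shows "wex (opc C) (W\<inverse>)"
proof -
  have c1: "\<forall>(i, d)\<in>W. kc_pair C i d" using w[unfolded wex_def, THEN conjunct1] .
  have c2: "\<forall>x d d'. (x,d) \<in> W \<longrightarrow> is_cokernel C d' x \<longrightarrow> (x,d') \<in> W"
    using w[unfolded wex_def, THEN conjunct2, THEN conjunct1] .
  have c3: "\<forall>x d x'. (x,d) \<in> W \<longrightarrow> is_kernel C x' d \<longrightarrow> (x',d) \<in> W"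
    using w[unfolded wex_def, THEN conjunct2, THEN conjunct2, THEN conjunct1] .
  have c4: "\<forall>x e \<theta> \<theta>'. (x,e) \<in> W \<longrightarrow> \<theta> \<in> mor C \<longrightarrow> \<theta>' \<in> mor C \<longrightarrow> dm C \<theta>' = cd C \<theta> \<longrightarrow> cd C \<theta>' = dm C \<theta> \<longrightarrow>
       cmp C \<theta>' \<theta> = idt C (dm C \<theta>) \<longrightarrow> cmp C \<theta> \<theta>' = idt C (cd C \<theta>) \<longrightarrow> cd C \<theta> = dm C e \<longrightarrow>
       (cmp C \<theta>' x, cmp C e \<theta>) \<in> W"
    using w[unfolded wex_def, THEN conjunct2, THEN conjunct2, THEN conjunct2, THEN conjunct1] .
  have c5: "\<forall>x e \<theta> \<theta>'. (x,e) \<in> W \<longrightarrow> \<theta> \<in> mor C \<longrightarrow> \<theta>' \<in> mor C \<longrightarrow> dm C \<theta>' = cd C \<theta> \<longrightarrow> cd C \<theta>' = dm C \<theta> \<longrightarrow>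
       cmp C \<theta>' \<theta> = idt C (dm C \<theta>) \<longrightarrow> cmp C \<theta> \<theta>' = idt C (cd C \<theta>) \<longrightarrow> dm C \<theta> = cd C x \<longrightarrow>
       (cmp C \<theta> x, cmp C e \<theta>') \<in> W"
    using w[unfolded wex_def, THEN conjunct2, THEN conjunct2, THEN conjunct2, THEN conjunct2, THEN conjunct1] .
  have c6: "\<forall>i t. adm_monic W i \<longrightarrow> t \<in> mor C \<longrightarrow> dm C t = dm C i \<longrightarrow>
        (\<exists>t' i'. is_pushout C i t t' i' \<and> adm_monic W i')"
    using w[unfolded wex_def, THEN conjunct2, THEN conjunct2, THEN conjunct2, THEN conjunct2, THEN conjunct2, THEN conjunct1] .
  have c7: "\<forall>h t. adm_epic W h \<longrightarrow> t \<in> mor C \<longrightarrow> cd C t = cd C h \<longrightarrow>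
        (\<exists>h' t'. is_pullback C h t h' t' \<and> adm_epic W h')"
    using w[unfolded wex_def, THEN conjunct2, THEN conjunct2, THEN conjunct2, THEN conjunct2, THEN conjunct2, THEN conjunct2] .
  show ?thesis
    unfolding wex_def
    apply (intro conjI)
    subgoal using c1 by (auto simp: kc_opc)
    subgoal using c3 by (auto simp: cokernel_opc)
    subgoal using c2 by (auto simp: kernel_opc)
    subgoal using c5 by auto
    subgoal using c4 by auto
    subgoal unfolding pushout_opc adm_conv opc_sel using c7 by blast
    subgoal unfolding pullback_opc adm_conv opc_sel using c6 by blast
    done
qed

theorem mainTheorem3:
  fixes C :: "('o, 'm) precat" and W :: "('m \<times> 'm) set"
  assumes "additive_cat C" and "weakly_exact C W"
  shows "(\<forall>i j. i \<in> mor C \<longrightarrow> j \<in> mor C \<longrightarrow> cd C i = dm C j \<longrightarrow>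
            has_cokernel C i \<longrightarrow> adm_monic W (cmp C j i) \<longrightarrow> adm_monic W i) \<and>
         (\<forall>f g. f \<in> mor C \<longrightarrow> g \<in> mor C \<longrightarrow> cd C f = dm C g \<longrightarrow>
            has_kernel C g \<longrightarrow> adm_epic W (cmp C g f) \<longrightarrow> adm_epic W g)"
proof -
  have pa: "preadditive C" using assms(1) unfolding additive_cat_def by blast
  have wx: "wex C W" using weakly_exact_wex[OF pa assms(2)] .
  have P: "pw C W" unfolding pw_def pw_axioms_def padd_def using pa wx by simp
  have pao: "preadditive (opc C)" using padd.preadditive_opc[of C] pa unfolding padd_def by blast
  have PO: "pw (opc C) (W\<inverse>)" unfolding pw_def pw_axioms_def padd_def using pao wex_opc[OF wx] by simp
  show ?thesis
  proof (intro conjI allI impI)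
    fix i j assume "i \<in> mor C" "j \<in> mor C" "cd C i = dm C j" "has_cokernel C i" "adm_monic W (cmp C j i)"
    thus "adm_monic W i" using pw.part1[OF P] by blast
  next
    fix f g assume a: "f \<in> mor C" "g \<in> mor C" "cd C f = dm C g" "has_kernel C g" "adm_epic W (cmp C g f)"
    have hc: "has_cokernel (opc C) g" using a(4) unfolding has_cokernel_def has_kernel_def cokernel_opc .
    have "adm_monic (W\<inverse>) g"
      by (rule pw.part1[OF PO, of g f]) (use a hc in \<open>simp_all add: adm_conv\<close>)
    thus "adm_epic W g" by (simp add: adm_conv)
  qed
qed



end
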